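(* Let $A=\mathrm{diag}(1,\kappa,\dots,\kappa)\in\mathbb{R}^{d\times d}$ with $\kappa\ge 10$, $h>0$, and let $\alpha_1,\alpha_{-1}\in\mathbb{R}$, $\beta_1,\beta_{-1}\ge0$ be parameters (possibly depending on $d,\kappa,h$) satisfying $|\alpha_{-1}|\le\frac35\beta_{-1}^2\kappa$, $|\alpha_1|\le C|\alpha_{-1}|$ and $\beta_1\le C\beta_{-1}$ for a fixed constant $C$, and $\beta_{-1}\sqrt{\kappa d/\log d}\to\infty$ as $d\to\infty$. Let $x\in\mathbb{R}^d$ satisfy $\|x_{-1}\|_2\le\sqrt{2d/(3\kappa)}$ and $|x_1|\le5\sqrt{\log d}$, let $g\sim\mathcal N(0,I_d)$ and $y_1=(1-\alpha_1)x_1+\beta_1g_1$, $y_{-1}=(1-\alpha_{-1})x_{-1}+\beta_{-1}g_{-1}$. Then there exist $c>0$ and $d_0$ (depending only on $C$ and on the rate at which $\beta_{-1}\sqrt{\kappa d/\log d}\to\infty$) such that for $d\ge d_0$, with probability at least $1-d^{-5}$ over $g$, $$\frac h4\|x\|_{A^2}^2-\frac h4\|y\|_{A^2}^2\le -c\,h\kappa^2\beta_{-1}^2d.$$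
   Context: $\|x\|_M=\sqrt{x^\top Mx}$ for positive semidefinite $M$. For $v\in\mathbb{R}^d$, $v_1$ is its first coordinate and $v_{-1}\in\mathbb{R}^{d-1}$ its remaining coordinates. *)

theory Defs
  imports "HOL-Probability.Probability"
begin

text \<open>Vectors in R^d are functions nat => real, coordinates indexed 0..d-1;
  coordinate 0 is the "first" coordinate v_1, coordinates 1..d-1 form v_{-1}.\<close>

definition Amat :: "real \<Rightarrow> nat \<Rightarrow> nat \<Rightarrow> real" where
  "Amat \<kappa> i j = (if i = j then (if i = 0 then 1 else \<kappa>) else 0)"

definition mat_mul :: "nat \<Rightarrow> (nat \<Rightarrow> nat \<Rightarrow> real) \<Rightarrow> (nat \<Rightarrow> nat \<Rightarrow> real) \<Rightarrow> nat \<Rightarrow> nat \<Rightarrow> real" where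
  "mat_mul d M N i j = (\<Sum>k<d. M i k * N k j)"

definition Mnorm :: "nat \<Rightarrow> (nat \<Rightarrow> nat \<Rightarrow> real) \<Rightarrow> (nat \<Rightarrow> real) \<Rightarrow> real" where
  "Mnorm d M x = sqrt (\<Sum>i<d. \<Sum>j<d. x i * M i j * x j)"

definition norm_tail :: "nat \<Rightarrow> (nat \<Rightarrow> real) \<Rightarrow> real" where
  "norm_tail d v = sqrt (\<Sum>i\<in>{1..<d}. (v i)\<^sup>2)"

definition gauss :: "nat \<Rightarrow> (nat \<Rightarrow> real) measure" where
  "gauss d = PiM {..<d} (\<lambda>_. density lborel std_normal_density)"

definition ystep :: "real \<Rightarrow> real \<Rightarrow> real \<Rightarrow> real \<Rightarrow> (nat \<Rightarrow> real) \<Rightarrow> (nat \<Rightarrow> real) \<Rightarrow> nat \<Rightarrow> real" where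
  "ystep \<alpha>1 \<alpha>m \<beta>1 \<beta>m x g i =
     (if i = 0 then (1 - \<alpha>1) * x 0 + \<beta>1 * g 0 else (1 - \<alpha>m) * x i + \<beta>m * g i)"

end

theory Submission
  imports Defs "HOL-Real_Asymp.Real_Asymp"
begin

lemma gauss1:
  fixes t b v :: real
  assumes t: "t \<ge> 0"
  shows "(\<integral>\<^sup>+ z. ennreal (exp (- t * (v + b * z)\<^sup>2)) \<partial>(density lborel std_normal_density))
       = ennreal (exp (- ln (1 + 2*t*b\<^sup>2) / 2 - t * v\<^sup>2 / (1 + 2*t*b\<^sup>2)))"
proof -
  define u where "u = 1 + 2*t*b\<^sup>2"
  have u: "u \<ge> 1" using t unfolding u_def by simp
  define s where "s = 1 / sqrt u"
  have s: "s > 0" using u unfolding s_def by simp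
  define m where "m = (- 2*t*b * v) / u"
  define K where "K = exp (- t * v\<^sup>2 / u) * s"
  have pt: "std_normal_density z * exp (- t * (v + b * z)\<^sup>2) = K * normal_density m s z" for z
  proof -
    have s2: "s\<^sup>2 = 1/u" using u unfolding s_def by (simp add: power_divide)
    have "normal_density m s z = 1 / sqrt (2*pi) * sqrt u * exp (-(z - m)\<^sup>2 * u / 2)"
      unfolding normal_density_def s2 using u
      by (simp add: real_sqrt_divide real_sqrt_mult field_simps)
    moreover have "- z\<^sup>2 / 2 + (- t * (v + b * z)\<^sup>2) = - t * v\<^sup>2 / u + (-(z - m)\<^sup>2 * u / 2)"
    proof -
      have zm: "(z - m) * u = z*u + 2*t*b * v" using u by (simp add: m_def field_simps)
      have "(z - m)\<^sup>2 * u = ((z - m) * u)\<^sup>2 / u" using u by (simp add: power2_eq_square)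
      also have "\<dots> = (z*u + 2*t*b * v)\<^sup>2 / u" by (simp add: zm)
      finally have e: "(z - m)\<^sup>2 * u = (z*u + 2*t*b * v)\<^sup>2 / u" .
      have A: "2 * u * (- z\<^sup>2 / 2 + (- t * (v + b * z)\<^sup>2)) = - 2 * t * v\<^sup>2 - (z*u + 2*t*b * v)\<^sup>2"
        unfolding u_def by (simp add: algebra_simps power2_eq_square)
      have "- z\<^sup>2 / 2 + (- t * (v + b * z)\<^sup>2) = (2 * u * (- z\<^sup>2 / 2 + (- t * (v + b * z)\<^sup>2))) / (2*u)"
        using u by simp
      also have "\<dots> = - t * v\<^sup>2 / u + (-(z*u + 2*t*b * v)\<^sup>2 / u / 2)"
        unfolding A using u by (simp add: field_simps)
      finally have "- z\<^sup>2 / 2 + (- t * (v + b * z)\<^sup>2) = - t * v\<^sup>2 / u + (-(z*u + 2*t*b * v)\<^sup>2 / u / 2)" .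
      thus ?thesis using e by simp
    qed
    ultimately have nd: "normal_density m s z = 1 / sqrt (2*pi) * sqrt u * exp (-(z - m)\<^sup>2 * u / 2)"
      and ee: "exp (- z\<^sup>2 / 2) * exp (- t * (v + b * z)\<^sup>2) = exp (- t * v\<^sup>2 / u) * exp (-(z - m)\<^sup>2 * u / 2)"
      by (auto simp: exp_add[symmetric])
    have su: "s * sqrt u = 1" using u unfolding s_def by simp
    have "std_normal_density z * exp (- t * (v + b * z)\<^sup>2) = 1 / sqrt (2*pi) * (exp (- z\<^sup>2 / 2) * exp (- t * (v + b * z)\<^sup>2))"
      unfolding std_normal_density_def by simp
    also have "\<dots> = 1 / sqrt (2*pi) * exp (- t * v\<^sup>2 / u) * exp (-(z - m)\<^sup>2 * u / 2)"
      unfolding ee by simp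
    also have "\<dots> = K * normal_density m s z"
      unfolding nd K_def using su by (simp add: algebra_simps)
    finally show ?thesis .
  qed
  have "(\<integral>\<^sup>+ z. ennreal (exp (- t * (v + b * z)\<^sup>2)) \<partial>(density lborel std_normal_density))
      = (\<integral>\<^sup>+ z. ennreal (std_normal_density z) * ennreal (exp (- t * (v + b * z)\<^sup>2)) \<partial>lborel)"
    by (subst nn_integral_density) auto
  also have "\<dots> = (\<integral>\<^sup>+ z. ennreal K * ennreal (normal_density m s z) \<partial>lborel)"
  proof (intro nn_integral_cong)
    fix z
    have K0: "K \<ge> 0" unfolding K_def using s by simp
    have "ennreal (std_normal_density z) * ennreal (exp (- t * (v + b * z)\<^sup>2)) = ennreal (std_normal_density z * exp (- t * (v + b * z)\<^sup>2))"
      by (rule ennreal_mult[symmetric]) auto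
    also have "\<dots> = ennreal (K * normal_density m s z)" by (simp only: pt)
    also have "\<dots> = ennreal K * ennreal (normal_density m s z)" by (rule ennreal_mult) (auto simp: K0)
    finally show "ennreal (std_normal_density z) * ennreal (exp (- t * (v + b * z)\<^sup>2)) = ennreal K * ennreal (normal_density m s z)" .
  qed
  also have "\<dots> = ennreal K * (\<integral>\<^sup>+ z. ennreal (normal_density m s z) \<partial>lborel)"
    by (rule nn_integral_cmult) auto
  also have "(\<integral>\<^sup>+ z. ennreal (normal_density m s z) \<partial>lborel) = 1"
  proof -
    have "(\<integral>\<^sup>+ z. ennreal (normal_density m s z) \<partial>lborel) = ennreal (\<integral> z. normal_density m s z \<partial>lborel)"
      by (rule nn_integral_eq_integral) (auto intro!: integrable_normal_density[OF s])
    also have "(\<integral> z. normal_density m s z \<partial>lborel) = 1" by (rule integral_normal_density[OF s])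
    finally show ?thesis by simp
  qed
  also have "K = exp (- ln u / 2 - t * v\<^sup>2 / u)"
  proof -
    have e1: "exp (ln u / 2) = sqrt u" using u by (simp add: powr_half_sqrt[symmetric] powr_def)
    have "K = exp (- t * v\<^sup>2 / u) / exp (ln u / 2)" unfolding K_def s_def e1 by simp
    also have "\<dots> = exp (- t * v\<^sup>2 / u - ln u / 2)" by (rule exp_diff[symmetric])
    finally show ?thesis by (simp add: algebra_simps)
  qed
  finally show ?thesis unfolding u_def by simp
qed


lemma mm_A2:
  assumes "i < d" "j < d"
  shows "mat_mul d (Amat \<kappa>) (Amat \<kappa>) i j = (if i = j then (if i = 0 then 1 else \<kappa>\<^sup>2) else 0)"
proof -
  have "mat_mul d (Amat \<kappa>) (Amat \<kappa>) i j = (\<Sum>k<d. if k = i then Amat \<kappa> i i * Amat \<kappa> i j else 0)"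
    unfolding mat_mul_def by (rule sum.cong) (auto simp: Amat_def)
  also have "\<dots> = Amat \<kappa> i i * Amat \<kappa> i j" using assms by simp
  finally show ?thesis by (auto simp: Amat_def power2_eq_square)
qed

lemma Mnorm_A2:
  assumes "0 < d"
  shows "(Mnorm d (mat_mul d (Amat \<kappa>) (Amat \<kappa>)) z)\<^sup>2 = (z 0)\<^sup>2 + \<kappa>\<^sup>2 * (\<Sum>i\<in>{1..<d}. (z i)\<^sup>2)"
proof -
  have inner: "(\<Sum>j<d. z i * mat_mul d (Amat \<kappa>) (Amat \<kappa>) i j * z j) = (if i = 0 then (z 0)\<^sup>2 else \<kappa>\<^sup>2 * (z i)\<^sup>2)"
    if i: "i < d" for i
  proof -
    have "(\<Sum>j<d. z i * mat_mul d (Amat \<kappa>) (Amat \<kappa>) i j * z j) = (\<Sum>j<d. if j = i then (if i = 0 then (z 0)\<^sup>2 else \<kappa>\<^sup>2 * (z i)\<^sup>2) else 0)"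
      by (rule sum.cong) (auto simp: mm_A2 i power2_eq_square)
    also have "\<dots> = (if i = 0 then (z 0)\<^sup>2 else \<kappa>\<^sup>2 * (z i)\<^sup>2)" using i by simp
    finally show ?thesis .
  qed
  have "(\<Sum>i<d. \<Sum>j<d. z i * mat_mul d (Amat \<kappa>) (Amat \<kappa>) i j * z j)
      = (\<Sum>i<d. if i = 0 then (z 0)\<^sup>2 else \<kappa>\<^sup>2 * (z i)\<^sup>2)"
    by (rule sum.cong) (auto simp: inner)
  also have "(\<Sum>i<d. if i = 0 then (z 0)\<^sup>2 else \<kappa>\<^sup>2 * (z i)\<^sup>2)
      = (z 0)\<^sup>2 + (\<Sum>i\<in>{1..<d}. \<kappa>\<^sup>2 * (z i)\<^sup>2)"
  proof -
    have dec: "{..<d} = insert 0 {1..<d}" using assms by auto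
    show ?thesis unfolding dec by (subst sum.insert) auto
  qed
  also have "\<dots> = (z 0)\<^sup>2 + \<kappa>\<^sup>2 * (\<Sum>i\<in>{1..<d}. (z i)\<^sup>2)" by (simp add: sum_distrib_left)
  finally have eq: "(\<Sum>i<d. \<Sum>j<d. z i * mat_mul d (Amat \<kappa>) (Amat \<kappa>) i j * z j) = (z 0)\<^sup>2 + \<kappa>\<^sup>2 * (\<Sum>i\<in>{1..<d}. (z i)\<^sup>2)" .
  have "0 \<le> (z 0)\<^sup>2 + \<kappa>\<^sup>2 * (\<Sum>i\<in>{1..<d}. (z i)\<^sup>2)" by (intro add_nonneg_nonneg mult_nonneg_nonneg sum_nonneg) auto
  thus ?thesis unfolding Mnorm_def eq by simp
qed

lemma chernoff:
  fixes v :: "nat \<Rightarrow> real" and b t a :: real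
  assumes t: "t \<ge> 0"
  shows "emeasure (gauss d) {g \<in> space (gauss d). (\<Sum>i\<in>{1..<d}. (v i + b * g i)\<^sup>2) < a}
     \<le> ennreal (exp (t * a + (\<Sum>i\<in>{1..<d}. - ln (1 + 2*t*b\<^sup>2) / 2 - t * (v i)\<^sup>2 / (1 + 2*t*b\<^sup>2))))"
proof -
  define N where "N = density lborel std_normal_density"
  have pN: "prob_space N" unfolding N_def by (rule prob_space_normal_density) simp
  interpret P: product_prob_space "\<lambda>_. N" "{..<d}"
    by (intro product_prob_space.intro product_sigma_finite.intro product_prob_space_axioms.intro prob_space_imp_sigma_finite pN)
  define S where "S g = (\<Sum>i\<in>{1..<d}. (v i + b * g i)\<^sup>2)" for g :: "nat \<Rightarrow> real"
  define f where "f i z = ennreal (if i = 0 then 1 else exp (- t * (v i + b * z)\<^sup>2))" for i z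
  have G: "gauss d = PiM {..<d} (\<lambda>_. N)" unfolding gauss_def N_def ..
  have comp: "(\<lambda>x. x i) \<in> borel_measurable (PiM {..<d} (\<lambda>_. N))" if "i < d" for i
    using measurable_component_singleton[of i "{..<d}" "\<lambda>_. N"] that unfolding N_def by simp
  have Smeas: "S \<in> borel_measurable (gauss d)" unfolding S_def G
    by (intro borel_measurable_sum borel_measurable_power borel_measurable_add borel_measurable_times borel_measurable_const comp) auto
  have pr: "(\<Prod>i<d. f i (g i)) = ennreal (exp (- t * S g))" for g
  proof -
    have "(\<Prod>i<d. f i (g i)) = ennreal (\<Prod>i<d. (if i = 0 then 1 else exp (- t * (v i + b * g i)\<^sup>2)))"
      unfolding f_def by (rule prod_ennreal) auto
    also have "(\<Prod>i<d. (if i = 0 then 1 else exp (- t * (v i + b * g i)\<^sup>2)))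
        = (\<Prod>i\<in>{1..<d}. exp (- t * (v i + b * g i)\<^sup>2))"
    proof (cases "d = 0")
      case False
      hence "{..<d} = insert 0 {1..<d}" by auto
      thus ?thesis by (simp add: prod.insert)
    qed simp
    also have "\<dots> = exp (- t * S g)" unfolding S_def by (simp add: exp_sum sum_distrib_left)
    finally show ?thesis .
  qed
  have "emeasure (gauss d) {g \<in> space (gauss d). S g < a} = (\<integral>\<^sup>+ g. indicator {g \<in> space (gauss d). S g < a} g \<partial>gauss d)"
    using Smeas by (intro nn_integral_indicator[symmetric]) measurable
  also have "\<dots> \<le> (\<integral>\<^sup>+ g. ennreal (exp (t * a)) * ennreal (exp (- t * S g)) \<partial>gauss d)"
  proof (intro nn_integral_mono)
    fix g
    show "indicator {g \<in> space (gauss d). S g < a} g \<le> ennreal (exp (t * a)) * ennreal (exp (- t * S g))"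
    proof (cases "S g < a")
      case True
      have "0 \<le> t * (a - S g)" using t True by simp
      hence "1 \<le> exp (t * (a - S g))" by simp
      hence "1 \<le> exp (t * a) * exp (- t * S g)" by (simp add: exp_add[symmetric] algebra_simps)
      hence "ennreal 1 \<le> ennreal (exp (t * a) * exp (- t * S g))" by (rule ennreal_leI)
      thus ?thesis by (simp add: indicator_def ennreal_mult[symmetric])
    qed (simp add: indicator_def)
  qed
  also have "\<dots> = ennreal (exp (t * a)) * (\<integral>\<^sup>+ g. ennreal (exp (- t * S g)) \<partial>gauss d)"
    using Smeas by (intro nn_integral_cmult) measurable
  also have "(\<integral>\<^sup>+ g. ennreal (exp (- t * S g)) \<partial>gauss d) = (\<integral>\<^sup>+ g. (\<Prod>i\<in>{..<d}. f i (g i)) \<partial>PiM {..<d} (\<lambda>_. N))"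
    unfolding G pr by simp
  also have "\<dots> = (\<Prod>i\<in>{..<d}. integral\<^sup>N N (f i))"
    by (rule P.product_nn_integral_prod) (auto simp: f_def N_def)
  also have "\<dots> = (\<Prod>i\<in>{..<d}. ennreal (if i = 0 then 1 else exp (- ln (1 + 2*t*b\<^sup>2) / 2 - t * (v i)\<^sup>2 / (1 + 2*t*b\<^sup>2))))"
  proof (rule prod.cong)
    fix i assume "i \<in> {..<d}"
    show "integral\<^sup>N N (f i) = ennreal (if i = 0 then 1 else exp (- ln (1 + 2*t*b\<^sup>2) / 2 - t * (v i)\<^sup>2 / (1 + 2*t*b\<^sup>2)))"
    proof (cases "i = 0")
      case True
      show ?thesis using True unfolding f_def by (simp add: prob_space.emeasure_space_1[OF pN])
    next
      case False
      show ?thesis using False gauss1[OF t, of "v i" b] unfolding f_def N_def by simp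
    qed
  qed simp
  also have "\<dots> = ennreal (exp (\<Sum>i\<in>{1..<d}. - ln (1 + 2*t*b\<^sup>2) / 2 - t * (v i)\<^sup>2 / (1 + 2*t*b\<^sup>2)))"
  proof -
    have "(\<Prod>i\<in>{..<d}. ennreal (if i = 0 then 1 else exp (- ln (1 + 2*t*b\<^sup>2) / 2 - t * (v i)\<^sup>2 / (1 + 2*t*b\<^sup>2))))
      = ennreal (\<Prod>i\<in>{..<d}. (if i = 0 then 1 else exp (- ln (1 + 2*t*b\<^sup>2) / 2 - t * (v i)\<^sup>2 / (1 + 2*t*b\<^sup>2))))"
      by (rule prod_ennreal) auto
    also have "(\<Prod>i\<in>{..<d}. (if i = 0 then 1 else exp (- ln (1 + 2*t*b\<^sup>2) / 2 - t * (v i)\<^sup>2 / (1 + 2*t*b\<^sup>2))))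
       = (\<Prod>i\<in>{1..<d}. exp (- ln (1 + 2*t*b\<^sup>2) / 2 - t * (v i)\<^sup>2 / (1 + 2*t*b\<^sup>2)))"
    proof (cases "d = 0")
      case False
      hence "{..<d} = insert 0 {1..<d}" by auto
      thus ?thesis by (simp add: prod.insert)
    qed simp
    finally show ?thesis by (simp add: exp_sum)
  qed
  finally show ?thesis unfolding S_def by (simp add: ennreal_mult[symmetric] exp_add)
qed


lemma expo:
  fixes D L \<kappa> \<beta> X \<alpha> q u t :: real
  assumes L: "L = ln D" "1 \<le> L" and D: "1 \<le> D"
    and k: "10 \<le> \<kappa>" and b: "0 < \<beta>" and X: "0 \<le> X" "X \<le> 2 * D / (3 * \<kappa>)"
    and a: "\<bar>\<alpha>\<bar> \<le> 3/5 * \<beta>\<^sup>2 * \<kappa>"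
    and wD: "\<kappa> * \<beta>\<^sup>2 * D \<ge> 4900 * L" and DL: "D \<ge> 4000 * L"
    and u: "u = min (1/20) (\<kappa> * \<beta>\<^sup>2 / 20)" and t: "t = u / (2 * \<beta>\<^sup>2)"
  shows "t * (X + 25 * L / \<kappa>\<^sup>2 + 4 * (1/200) * \<beta>\<^sup>2 * D)
          + (D - 1) * (- ln (1 + u) / 2) - t * ((1 - \<alpha>)\<^sup>2 * X) / (1 + u) \<le> - 5 * L"
proof -
  define w where "w = \<kappa> * \<beta>\<^sup>2"
  have w: "w > 0" unfolding w_def using k b by simp
  define q where "q = u / w"
  have u0: "0 < u" "u \<le> 1/20" "u \<le> w / 20" using u w unfolding w_def by auto
  have q: "0 < q" "q \<le> 1/20" unfolding q_def using u0 w by (auto simp: field_simps)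
  have uq: "u = q * w" unfolding q_def using w by simp
  have tq: "t = q * \<kappa> / 2" unfolding t uq w_def using b by (simp add: field_simps)
  have t0: "t \<ge> 0" unfolding tq using q k by simp
  have tX: "t * X \<le> q * D / 3"
  proof -
    have "t * X \<le> t * (2 * D / (3 * \<kappa>))" using t0 X by (intro mult_left_mono) auto
    also have "\<dots> = q * D / 3" unfolding tq using k by (simp add: field_simps)
    finally show ?thesis .
  qed
  have tX0: "0 \<le> t * X" using t0 X by simp
  have fr: "1 - (1 - \<alpha>)\<^sup>2 / (1 + u) \<le> u + 2 * \<bar>\<alpha>\<bar>"
  proof -
    have "(1 + u) - (1 - \<alpha>)\<^sup>2 \<le> (u + 2 * \<bar>\<alpha>\<bar>) * (1 + u)"
    proof -
      have "(1 + u) - (1 - \<alpha>)\<^sup>2 = u + 2 * \<alpha> - \<alpha>\<^sup>2" by (simp add: power2_eq_square algebra_simps)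
      also have "\<dots> \<le> u + 2 * \<bar>\<alpha>\<bar>" using abs_ge_self[of \<alpha>] zero_le_power2[of \<alpha>] by linarith
      also have "\<dots> \<le> (u + 2 * \<bar>\<alpha>\<bar>) + (u + 2 * \<bar>\<alpha>\<bar>) * u" using u0 by simp
      also have "\<dots> = (u + 2 * \<bar>\<alpha>\<bar>) * (1 + u)" by (simp add: algebra_simps)
      finally show ?thesis .
    qed
    thus ?thesis using u0 by (simp add: field_simps)
  qed
  have A: "t * X - t * ((1 - \<alpha>)\<^sup>2 * X) / (1 + u) \<le> t * X * (u + 2 * \<bar>\<alpha>\<bar>)"
  proof -
    have "t * X - t * ((1 - \<alpha>)\<^sup>2 * X) / (1 + u) = t * X * (1 - (1 - \<alpha>)\<^sup>2 / (1 + u))"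
      by (simp add: algebra_simps)
    also have "\<dots> \<le> t * X * (u + 2 * \<bar>\<alpha>\<bar>)" using fr tX0 by (rule mult_left_mono)
    finally show ?thesis .
  qed
  have A1: "t * X * u \<le> (u * D) / 60"
  proof -
    have "t * X * u \<le> (q * D / 3) * u" using tX u0 by (intro mult_right_mono) auto
    also have "\<dots> \<le> (1/20 * D / 3) * u" using q u0 D by (intro mult_right_mono divide_right_mono mult_right_mono) auto
    finally show ?thesis by (simp add: mult.commute)
  qed
  have A2: "t * X * (2 * \<bar>\<alpha>\<bar>) \<le> 2/5 * (u * D)"
  proof -
    have "t * X * (2 * \<bar>\<alpha>\<bar>) \<le> (q * D / 3) * (2 * (3/5 * \<beta>\<^sup>2 * \<kappa>))"
      using tX tX0 a q D by (intro mult_mono) auto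
    also have "\<dots> = 2/5 * (u * D)" unfolding uq w_def by (simp add: algebra_simps)
    finally show ?thesis .
  qed
  have B: "t * (25 * L / \<kappa>\<^sup>2) \<le> L / 16"
  proof -
    have "t * (25 * L / \<kappa>\<^sup>2) = q * (25 * L / (2 * \<kappa>))" unfolding tq using k by (simp add: field_simps power2_eq_square)
    also have "\<dots> \<le> (1/20) * (25 * L / (2 * 10))"
      using q L k by (intro mult_mono divide_left_mono) auto
    finally show ?thesis by simp
  qed
  have C: "t * (4 * (1/200) * \<beta>\<^sup>2 * D) = (u * D) / 100"
    unfolding tq uq w_def by (simp add: algebra_simps)
  have lnl: "u - u\<^sup>2 \<le> ln (1 + u)" using u0 by (intro ln_one_plus_pos_lower_bound) auto
  have Dm0: "(D - 1) * (- ln (1 + u) / 2) \<le> - D * u / 2 + 1/40 + D * u / 40"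
  proof -
    have "(D - 1) * (- ln (1 + u) / 2) \<le> (D - 1) * (- (u - u\<^sup>2) / 2)"
      using D lnl by (intro mult_left_mono) auto
    also have "\<dots> = - D * u / 2 + u / 2 + D * u * u / 2 - u * u / 2" by (simp add: field_simps power2_eq_square)
    also have "\<dots> \<le> - D * u / 2 + 1/40 + D * u / 40"
    proof -
      have "D * u * u \<le> D * u * (1/20)" using u0 D by (intro mult_left_mono) auto
      moreover have "0 \<le> u * u" by simp
      ultimately show ?thesis using u0 by linarith
    qed
    finally show ?thesis .
  qed
  have Dm: "(D - 1) * (- ln (1 + u) / 2) \<le> - (u * D) / 2 + 1/40 + (u * D) / 40"
    using Dm0 by (simp add: mult.commute)
  have uD: "u * D \<ge> 200 * L"
  proof (cases "1/20 \<le> \<kappa> * \<beta>\<^sup>2 / 20")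
    case True
    hence "u = 1/20" using u by simp
    hence "u * D = D / 20" by simp
    thus ?thesis using DL by linarith
  next
    case False
    hence "u = \<kappa> * \<beta>\<^sup>2 / 20" using u by simp
    hence "u * D = \<kappa> * \<beta>\<^sup>2 * D / 20" by simp
    thus ?thesis using wD L by linarith
  qed
  have "t * (X + 25 * L / \<kappa>\<^sup>2 + 4 * (1/200) * \<beta>\<^sup>2 * D)
          + (D - 1) * (- ln (1 + u) / 2) - t * ((1 - \<alpha>)\<^sup>2 * X) / (1 + u)
     = (t * X - t * ((1 - \<alpha>)\<^sup>2 * X) / (1 + u)) + t * (25 * L / \<kappa>\<^sup>2) + t * (4 * (1/200) * \<beta>\<^sup>2 * D)
          + (D - 1) * (- ln (1 + u) / 2)" by (simp add: algebra_simps)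
  also have "\<dots> \<le> - 5 * L"
  proof -
    have sp: "t * X * (u + 2 * \<bar>\<alpha>\<bar>) = t * X * u + t * X * (2 * \<bar>\<alpha>\<bar>)" by (simp add: algebra_simps)
    show ?thesis using A A1 A2 B C Dm uD L(2) sp by linarith
  qed
  finally show ?thesis .
qed


theorem proposition1:
  fixes C :: real and R :: "nat \<Rightarrow> real"
  assumes "filterlim R at_top sequentially"
  shows "\<exists>c>0. \<exists>d0::nat. \<forall>d\<ge>d0. \<forall>\<kappa>::real. \<forall>h::real. \<forall>\<alpha>1 \<alpha>m \<beta>1 \<beta>m :: real. \<forall>x :: nat \<Rightarrow> real.
     \<kappa> \<ge> 10 \<and> h > 0 \<and> \<beta>1 \<ge> 0 \<and> \<beta>m \<ge> 0 \<and>
     \<bar>\<alpha>m\<bar> \<le> 3/5 * \<beta>m\<^sup>2 * \<kappa> \<and> \<bar>\<alpha>1\<bar> \<le> C * \<bar>\<alpha>m\<bar> \<and> \<beta>1 \<le> C * \<beta>m \<and>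
     \<beta>m * sqrt (\<kappa> * real d / ln (real d)) \<ge> R d \<and>
     norm_tail d x \<le> sqrt (2 * real d / (3 * \<kappa>)) \<and> \<bar>x 0\<bar> \<le> 5 * sqrt (ln (real d))
     \<longrightarrow> measure (gauss d)
           {g \<in> space (gauss d).
              h / 4 * (Mnorm d (mat_mul d (Amat \<kappa>) (Amat \<kappa>)) x)\<^sup>2
              - h / 4 * (Mnorm d (mat_mul d (Amat \<kappa>) (Amat \<kappa>)) (ystep \<alpha>1 \<alpha>m \<beta>1 \<beta>m x g))\<^sup>2
              \<le> - c * h * \<kappa>\<^sup>2 * \<beta>m\<^sup>2 * real d}
         \<ge> 1 - real d powr (-5)"
proof -
  have "eventually (\<lambda>d. 70 \<le> R d) sequentially" using assms by (simp add: filterlim_at_top)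
  moreover have "eventually (\<lambda>d::nat. 4000 * ln (real d) \<le> real d) sequentially" by real_asymp
  moreover have "eventually (\<lambda>d::nat. 3 \<le> d) sequentially" by (rule eventually_ge_at_top)
  ultimately have "eventually (\<lambda>d. 70 \<le> R d \<and> 4000 * ln (real d) \<le> real d \<and> 3 \<le> d) sequentially"
    by eventually_elim auto
  then obtain d0 where d0: "\<And>d. d \<ge> d0 \<Longrightarrow> 70 \<le> R d \<and> 4000 * ln (real d) \<le> real d \<and> 3 \<le> d"
    by (auto simp: eventually_sequentially)
  show ?thesis
  proof (intro exI[of _ "1/200"] conjI exI[of _ d0] allI impI)
    show "(0::real) < 1/200" by simp
    fix d :: nat and \<kappa> h \<alpha>1 \<alpha>m \<beta>1 \<beta>m :: real and x :: "nat \<Rightarrow> real"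
    assume dd: "d0 \<le> d"
    assume H: "\<kappa> \<ge> 10 \<and> h > 0 \<and> \<beta>1 \<ge> 0 \<and> \<beta>m \<ge> 0 \<and>
     \<bar>\<alpha>m\<bar> \<le> 3/5 * \<beta>m\<^sup>2 * \<kappa> \<and> \<bar>\<alpha>1\<bar> \<le> C * \<bar>\<alpha>m\<bar> \<and> \<beta>1 \<le> C * \<beta>m \<and>
     \<beta>m * sqrt (\<kappa> * real d / ln (real d)) \<ge> R d \<and>
     norm_tail d x \<le> sqrt (2 * real d / (3 * \<kappa>)) \<and> \<bar>x 0\<bar> \<le> 5 * sqrt (ln (real d))"
    have R70: "70 \<le> R d" and DL: "4000 * ln (real d) \<le> real d" and d3: "3 \<le> d" using d0[OF dd] by auto
    have k: "10 \<le> \<kappa>" and hp: "0 < h" and bm0: "0 \<le> \<beta>m" and am: "\<bar>\<alpha>m\<bar> \<le> 3/5 * \<beta>m\<^sup>2 * \<kappa>"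
      and bR: "\<beta>m * sqrt (\<kappa> * real d / ln (real d)) \<ge> R d"
      and nt: "norm_tail d x \<le> sqrt (2 * real d / (3 * \<kappa>))"
      and x0: "\<bar>x 0\<bar> \<le> 5 * sqrt (ln (real d))" using H by auto
    define L where "L = ln (real d)"
    have L1: "1 \<le> L"
    proof -
      have "exp 1 \<le> real d" using exp_le d3 by linarith
      hence "ln (exp 1) \<le> ln (real d)" using d3 by (subst ln_le_cancel_iff) auto
      thus ?thesis unfolding L_def by simp
    qed
    have dpos: "0 < real d" using d3 by simp
    have b70: "70 \<le> \<beta>m * sqrt (\<kappa> * real d / L)" using R70 bR unfolding L_def by linarith
    have bpos: "0 < \<beta>m"
    proof (rule ccontr)
      assume "\<not> 0 < \<beta>m" hence "\<beta>m = 0" using bm0 by simp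
      thus False using b70 by simp
    qed
    have wD: "\<kappa> * \<beta>m\<^sup>2 * real d \<ge> 4900 * L"
    proof -
      have "70\<^sup>2 \<le> (\<beta>m * sqrt (\<kappa> * real d / L))\<^sup>2" using b70 by (intro power_mono) auto
      also have "\<dots> = \<beta>m\<^sup>2 * (\<kappa> * real d / L)" using k dpos L1 by (simp add: power_mult_distrib)
      finally have "4900 \<le> \<beta>m\<^sup>2 * (\<kappa> * real d / L)" by simp
      hence "4900 * L \<le> \<beta>m\<^sup>2 * (\<kappa> * real d / L) * L" using L1 by (intro mult_right_mono) auto
      also have "\<dots> = \<kappa> * \<beta>m\<^sup>2 * real d" using L1 by (simp add: field_simps)
      finally show ?thesis .
    qed
    define X where "X = (\<Sum>i\<in>{1..<d}. (x i)\<^sup>2)"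
    have X0: "0 \<le> X" unfolding X_def by (intro sum_nonneg) auto
    have XD: "X \<le> 2 * real d / (3 * \<kappa>)"
      using nt unfolding norm_tail_def X_def[symmetric] by simp
    have x0L: "(x 0)\<^sup>2 \<le> 25 * L"
    proof -
      have "\<bar>x 0\<bar>\<^sup>2 \<le> (5 * sqrt L)\<^sup>2" using x0 unfolding L_def by (intro power_mono) auto
      thus ?thesis using L1 by (simp add: power_mult_distrib)
    qed
    define u where "u = min (1/20) (\<kappa> * \<beta>m\<^sup>2 / 20)"
    define t where "t = u / (2 * \<beta>m\<^sup>2)"
    define a where "a = X + 25 * L / \<kappa>\<^sup>2 + 4 * (1/200) * \<beta>m\<^sup>2 * real d"
    define v where "v i = (1 - \<alpha>m) * x i" for i
    have u0: "0 < u" unfolding u_def using k bpos by simp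
    have t0: "0 \<le> t" unfolding t_def using u0 by simp
    have tu: "2 * t * \<beta>m\<^sup>2 = u" unfolding t_def using bpos by simp
    have E: "t * a + (real d - 1) * (- ln (1 + u) / 2) - t * ((1 - \<alpha>m)\<^sup>2 * X) / (1 + u) \<le> - 5 * L"
      unfolding a_def
      by (rule expo[OF L_def L1 _ k bpos X0 XD am wD DL[folded L_def] u_def t_def]) (use d3 in simp)
    define S where "S g = (\<Sum>i\<in>{1..<d}. (v i + \<beta>m * g i)\<^sup>2)" for g :: "nat \<Rightarrow> real"
    define B where "B = {g \<in> space (gauss d). S g < a}"
    have ch: "emeasure (gauss d) B \<le> ennreal (exp (t * a + (\<Sum>i\<in>{1..<d}. - ln (1 + 2*t*\<beta>m\<^sup>2) / 2 - t * (v i)\<^sup>2 / (1 + 2*t*\<beta>m\<^sup>2))))"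
      unfolding B_def S_def by (rule chernoff[OF t0])
    have sumeq: "(\<Sum>i\<in>{1..<d}. - ln (1 + 2*t*\<beta>m\<^sup>2) / 2 - t * (v i)\<^sup>2 / (1 + 2*t*\<beta>m\<^sup>2))
        = (real d - 1) * (- ln (1 + u) / 2) - t * ((1 - \<alpha>m)\<^sup>2 * X) / (1 + u)"
    proof -
      have "(\<Sum>i\<in>{1..<d}. - ln (1 + 2*t*\<beta>m\<^sup>2) / 2 - t * (v i)\<^sup>2 / (1 + 2*t*\<beta>m\<^sup>2))
          = (\<Sum>i\<in>{1..<d}. - ln (1 + u) / 2) - (\<Sum>i\<in>{1..<d}. t * (1 - \<alpha>m)\<^sup>2 / (1 + u) * (x i)\<^sup>2)"
        unfolding tu v_def by (simp add: sum_subtractf power_mult_distrib mult.assoc)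
      also have "(\<Sum>i\<in>{1..<d}. - ln (1 + u) / 2) = (real d - 1) * (- ln (1 + u) / 2)"
        using d3 by (simp add: of_nat_diff)
      also have "(\<Sum>i\<in>{1..<d}. t * (1 - \<alpha>m)\<^sup>2 / (1 + u) * (x i)\<^sup>2) = t * ((1 - \<alpha>m)\<^sup>2 * X) / (1 + u)"
      proof -
        have "(\<Sum>i\<in>{1..<d}. t * (1 - \<alpha>m)\<^sup>2 / (1 + u) * (x i)\<^sup>2) = t * (1 - \<alpha>m)\<^sup>2 / (1 + u) * X"
          unfolding X_def by (rule sum_distrib_left[symmetric])
        thus ?thesis by simp
      qed
      finally show ?thesis .
    qed
    have expb: "exp (t * a + (\<Sum>i\<in>{1..<d}. - ln (1 + 2*t*\<beta>m\<^sup>2) / 2 - t * (v i)\<^sup>2 / (1 + 2*t*\<beta>m\<^sup>2)))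
        \<le> real d powr (-5)"
    proof -
      have "exp (t * a + (\<Sum>i\<in>{1..<d}. - ln (1 + 2*t*\<beta>m\<^sup>2) / 2 - t * (v i)\<^sup>2 / (1 + 2*t*\<beta>m\<^sup>2)))
          \<le> exp (- 5 * L)" unfolding sumeq using E by simp
      also have "\<dots> = real d powr (-5)" unfolding L_def powr_def using dpos by simp
      finally show ?thesis .
    qed
    have ps: "prob_space (gauss d)" unfolding gauss_def
      by (rule prob_space_PiM) (rule prob_space_normal_density, simp)
    interpret PS: prob_space "gauss d" by (rule ps)
    have comp: "(\<lambda>g. g i) \<in> borel_measurable (gauss d)" if "i < d" for i
      using measurable_component_singleton[of i "{..<d}" "\<lambda>_. density lborel std_normal_density"] that
      unfolding gauss_def by simp
    have Smeas: "S \<in> borel_measurable (gauss d)" unfolding S_def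
      by (intro borel_measurable_sum borel_measurable_power borel_measurable_add borel_measurable_times borel_measurable_const comp) auto
    have Bsets: "B \<in> sets (gauss d)" unfolding B_def by (rule borel_measurable_less[OF Smeas borel_measurable_const])
    have mB: "measure (gauss d) B \<le> real d powr (-5)"
    proof -
      have "emeasure (gauss d) B \<le> ennreal (real d powr (-5))"
        using ch ennreal_leI[OF expb] by (rule order_trans)
      hence "ennreal (measure (gauss d) B) \<le> ennreal (real d powr (-5))"
        by (simp add: PS.emeasure_eq_measure)
      thus ?thesis by (subst (asm) ennreal_le_iff) auto
    qed
    let ?M = "mat_mul d (Amat \<kappa>) (Amat \<kappa>)"
    let ?y = "\<lambda>g. ystep \<alpha>1 \<alpha>m \<beta>1 \<beta>m x g"
    have ynorm: "(Mnorm d ?M (?y g))\<^sup>2 = ((1 - \<alpha>1) * x 0 + \<beta>1 * g 0)\<^sup>2 + \<kappa>\<^sup>2 * S g" for g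
    proof -
      have "(\<Sum>i\<in>{1..<d}. (?y g i)\<^sup>2) = S g" unfolding S_def v_def
        by (rule sum.cong) (auto simp: ystep_def)
      thus ?thesis using Mnorm_A2[of d \<kappa> "?y g"] dpos by (simp add: ystep_def)
    qed
    have xnorm: "(Mnorm d ?M x)\<^sup>2 = (x 0)\<^sup>2 + \<kappa>\<^sup>2 * X" unfolding X_def using Mnorm_A2[of d \<kappa> x] dpos by simp
    define G where "G = {g \<in> space (gauss d).
              h / 4 * (Mnorm d ?M x)\<^sup>2 - h / 4 * (Mnorm d ?M (?y g))\<^sup>2 \<le> - (1/200) * h * \<kappa>\<^sup>2 * \<beta>m\<^sup>2 * real d}"
    have G2: "G = {g \<in> space (gauss d).
              h / 4 * ((x 0)\<^sup>2 + \<kappa>\<^sup>2 * X) - h / 4 * (((1 - \<alpha>1) * x 0 + \<beta>1 * g 0)\<^sup>2 + \<kappa>\<^sup>2 * S g)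
                \<le> - (1/200) * h * \<kappa>\<^sup>2 * \<beta>m\<^sup>2 * real d}"
      unfolding G_def xnorm ynorm ..
    have Phi: "(\<lambda>g. h / 4 * ((x 0)\<^sup>2 + \<kappa>\<^sup>2 * X) - h / 4 * (((1 - \<alpha>1) * x 0 + \<beta>1 * g 0)\<^sup>2 + \<kappa>\<^sup>2 * S g))
        \<in> borel_measurable (gauss d)"
      by (intro borel_measurable_diff borel_measurable_times borel_measurable_add borel_measurable_power
            borel_measurable_const Smeas comp) (use d3 in simp)
    have Gsets: "G \<in> sets (gauss d)" unfolding G2
      by (rule borel_measurable_le[OF Phi borel_measurable_const])
    have sub: "space (gauss d) - B \<subseteq> G"
    proof
      fix g assume g: "g \<in> space (gauss d) - B"
      hence Sa: "a \<le> S g" unfolding B_def by auto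
      have "\<kappa>\<^sup>2 * a = \<kappa>\<^sup>2 * X + 25 * L + 4 * (1/200) * \<kappa>\<^sup>2 * \<beta>m\<^sup>2 * real d"
        unfolding a_def using k by (simp add: field_simps)
      moreover have "\<kappa>\<^sup>2 * a \<le> \<kappa>\<^sup>2 * S g" using Sa by (intro mult_left_mono) auto
      moreover have "0 \<le> ((1 - \<alpha>1) * x 0 + \<beta>1 * g 0)\<^sup>2" by simp
      ultimately have "(x 0)\<^sup>2 + \<kappa>\<^sup>2 * X - (((1 - \<alpha>1) * x 0 + \<beta>1 * g 0)\<^sup>2 + \<kappa>\<^sup>2 * S g)
          \<le> - (4 * (1/200) * \<kappa>\<^sup>2 * \<beta>m\<^sup>2 * real d)" using x0L by linarith
      hence "h / 4 * ((x 0)\<^sup>2 + \<kappa>\<^sup>2 * X - (((1 - \<alpha>1) * x 0 + \<beta>1 * g 0)\<^sup>2 + \<kappa>\<^sup>2 * S g))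
          \<le> h / 4 * (- (4 * (1/200) * \<kappa>\<^sup>2 * \<beta>m\<^sup>2 * real d))" using hp by (intro mult_left_mono) auto
      thus "g \<in> G" unfolding G2 using g by (simp add: algebra_simps)
    qed
    have "1 - real d powr (-5) \<le> 1 - measure (gauss d) B" using mB by simp
    also have "\<dots> = measure (gauss d) (space (gauss d) - B)" using PS.prob_compl[OF Bsets] by simp
    also have "\<dots> \<le> measure (gauss d) G" using sub Gsets by (intro PS.finite_measure_mono)
    finally show "measure (gauss d)
           {g \<in> space (gauss d).
              h / 4 * (Mnorm d (mat_mul d (Amat \<kappa>) (Amat \<kappa>)) x)\<^sup>2
              - h / 4 * (Mnorm d (mat_mul d (Amat \<kappa>) (Amat \<kappa>)) (ystep \<alpha>1 \<alpha>m \<beta>1 \<beta>m x g))\<^sup>2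
              \<le> - (1/200) * h * \<kappa>\<^sup>2 * \<beta>m\<^sup>2 * real d} \<ge> 1 - real d powr (-5)"
      unfolding G_def by simp
  qed
qed

end
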